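(* Let $N\ge1$ and $n\ge1$ be integers, $\phi>0$, $L>0$, and $0<\eta_0\le\eta_1\le\dots\le\eta_N$. For $t\in[N]$ let $a_t\in\mathbb{R}^n$ with $\|a_t\|_2\le L$, and for $t\in\{0,1,\dots,N\}$ define $A_t=\eta_tI+\phi\sum_{\tau=1}^{t}a_\tau a_\tau^\top$. Let $d_1,\dots,d_N\in\{0,1,2,\dots\}$ be delays, $m_t=\{\tau\in[t-1]:\tau+d_\tau\ge t\}$, and $d_{\max}^{\le N}=\max_{\tau\le N}\min\{d_\tau,N-\tau\}$. Then $$\sum_{t=1}^N\|a_t\|_{A_{t-1}^{-1}}\left(\sum_{\tau\in m_t}\|a_\tau\|_{A_{t-1}^{-1}}\right)\le\frac{2n\,d_{\max}^{\le N}}{\phi}\left(\frac{\phi L^2}{\eta_0}+1\right)\ln\left(1+\frac{\phi L^2N}{\eta_0 n}\right),$$ and $$\sum_{t=1}^N\|a_t\|_{A_t^{-1}}\left(\sum_{\tau\in m_t}\|a_\tau\|_{A_t^{-1}}\right)\le\frac{2n\,d_{\max}^{\le N}}{\phi}\ln\left(1+\frac{\phi L^2N}{\eta_0 n}\right).$$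
   Context: For a positive definite matrix $A$ and $x\in\mathbb{R}^n$, $\|x\|_{A^{-1}}=\sqrt{x^\top A^{-1}x}$. $[t-1]=\{1,\dots,t-1\}$. *)

theory Defs
  imports "HOL-Analysis.Analysis"
begin

definition outer :: "real^'n \<Rightarrow> real^'n^'n" where
  "outer a = (\<chi> i j. a $ i * a $ j)"

definition inv_norm :: "real^'n^'n \<Rightarrow> real^'n \<Rightarrow> real" where
  "inv_norm A x = sqrt (x \<bullet> (matrix_inv A *v x))"

definition Amat :: "(nat \<Rightarrow> real) \<Rightarrow> real \<Rightarrow> (nat \<Rightarrow> real^'n) \<Rightarrow> nat \<Rightarrow> real^'n^'n" where
  "Amat eta phi a t = eta t *\<^sub>R mat 1 + phi *\<^sub>R (\<Sum>\<tau>\<in>{1..t}. outer (a \<tau>))"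

definition mset_delay :: "(nat \<Rightarrow> nat) \<Rightarrow> nat \<Rightarrow> nat set" where
  "mset_delay d t = {\<tau> \<in> {1..t-1}. \<tau> + d \<tau> \<ge> t}"

definition dmax :: "(nat \<Rightarrow> nat) \<Rightarrow> nat \<Rightarrow> nat" where
  "dmax d N = Max ((\<lambda>\<tau>. min (d \<tau>) (N - \<tau>)) ` {1..N})"

end

theory Submission
  imports Defs
begin


definition symm :: "real^'n^'n \<Rightarrow> bool" where
  "symm M \<longleftrightarrow> transpose M = M"

definition pd :: "real^'n^'n \<Rightarrow> bool" where
  "pd M \<longleftrightarrow> symm M \<and> (\<forall>x. x \<noteq> 0 \<longrightarrow> x \<bullet> (M *v x) > 0)"

lemma symm_inner: "symm M \<Longrightarrow> x \<bullet> (M *v y) = y \<bullet> (M *v x)"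
  by (metis dot_lmul_matrix inner_commute symm_def vector_transpose_matrix)

lemma pd_invertible:
  assumes "pd M" shows "invertible M"
proof -
  have "\<forall>x. M *v x = 0 \<longrightarrow> x = 0"
    using assms unfolding pd_def by (metis inner_zero_right less_irrefl)
  then obtain B where "B ** M = mat 1" using matrix_left_invertible_ker by blast
  then show ?thesis using invertible_left_inverse by blast
qed

lemma matrix_inv_props:
  assumes "invertible M"
  shows "M ** matrix_inv M = mat 1" "matrix_inv M ** M = mat 1"
proof -
  have "\<exists>A'. M ** A' = mat 1 \<and> A' ** M = mat 1" using assms invertible_def by blast
  then have "M ** matrix_inv M = mat 1 \<and> matrix_inv M ** M = mat 1"
    unfolding matrix_inv_def by (rule someI_ex)
  then show "M ** matrix_inv M = mat 1" "matrix_inv M ** M = mat 1" by auto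
qed

lemma matrix_inv_solve:
  assumes "invertible M" "M *v z = y"
  shows "matrix_inv M *v y = z"
  using assms matrix_inv_props(2)[OF assms(1)]
  by (metis matrix_vector_mul_assoc matrix_vector_mul_lid)

lemma matrix_inv_apply:
  assumes "invertible M"
  shows "M *v (matrix_inv M *v y) = y"
  using matrix_inv_props(1)[OF assms]
  by (metis matrix_vector_mul_assoc matrix_vector_mul_lid)

lemma variational:
  assumes "symm M" "M *v z = x" "\<forall>w. w \<bullet> (M *v w) \<ge> 0"
  shows "2 * (x \<bullet> y) - y \<bullet> (M *v y) \<le> x \<bullet> z"
proof -
  have "0 \<le> (y - z) \<bullet> (M *v (y - z))" using assms(3) by blast
  also have "\<dots> = y \<bullet> (M *v y) - 2 * (y \<bullet> (M *v z)) + z \<bullet> (M *v z)"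
    using symm_inner[OF assms(1), of y z]
    by (simp add: matrix_vector_mult_diff_distrib inner_diff_left inner_diff_right)
  finally show ?thesis using assms(2) by (simp add: inner_commute)
qed

definition qf :: "real^'n^'n \<Rightarrow> real^'n \<Rightarrow> real" where
  "qf M x = x \<bullet> (matrix_inv M *v x)"

lemma qf_nonneg:
  assumes "pd M" shows "qf M x \<ge> 0"
proof -
  have inv: "invertible M" using pd_invertible assms by blast
  let ?z = "matrix_inv M *v x"
  have "x = M *v ?z" using matrix_inv_apply[OF inv] by simp
  then have "qf M x = ?z \<bullet> (M *v ?z)" unfolding qf_def by (metis inner_commute)
  then show ?thesis using assms unfolding pd_def
    by (metis inner_zero_left less_eq_real_def matrix_vector_mult_0_right)
qed

lemma qf_mono:
  assumes "pd M" "pd M'" "\<And>w. w \<bullet> (M *v w) \<le> w \<bullet> (M' *v w)"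
  shows "qf M' x \<le> qf M x"
proof -
  have inv: "invertible M" "invertible M'" using pd_invertible assms by blast+
  define z where "z = matrix_inv M *v x"
  define z' where "z' = matrix_inv M' *v x"
  have Mz: "M *v z = x" unfolding z_def using matrix_inv_apply[OF inv(1)] by simp
  have Mz': "M' *v z' = x" unfolding z'_def using matrix_inv_apply[OF inv(2)] by simp
  have nn: "\<forall>w. w \<bullet> (M *v w) \<ge> 0" using assms(1) unfolding pd_def
    by (metis inner_zero_left less_eq_real_def matrix_vector_mult_0_right)
  have sy: "symm M" using assms(1) pd_def by blast
  have v: "2 * (x \<bullet> z') - z' \<bullet> (M *v z') \<le> x \<bullet> z" using variational[OF sy Mz nn] .
  have "z' \<bullet> (M *v z') \<le> z' \<bullet> (M' *v z')" using assms(3) by blast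
  also have "\<dots> = x \<bullet> z'" using Mz' by (simp add: inner_commute)
  finally show ?thesis using v unfolding qf_def z_def[symmetric] z'_def[symmetric] by linarith
qed

lemma qf_scalar_bound:
  assumes "pd M" "\<And>w. w \<bullet> (M *v w) \<ge> c * (w \<bullet> w)" "c > 0"
  shows "qf M x \<le> (x \<bullet> x) / c"
proof -
  have inv: "invertible M" using pd_invertible assms by blast
  define z where "z = matrix_inv M *v x"
  have Mz: "M *v z = x" unfolding z_def using matrix_inv_apply[OF inv] by simp
  have q: "qf M x = x \<bullet> z" unfolding qf_def z_def ..
  have "c * (z \<bullet> z) \<le> x \<bullet> z" using assms(2)[of z] Mz by (simp add: inner_commute)
  also have "\<dots> \<le> norm x * norm z" by (rule norm_cauchy_schwarz)
  finally have 1: "c * (norm z)^2 \<le> norm x * norm z" by (simp add: power2_norm_eq_inner)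
  have "norm z \<le> norm x / c"
  proof (cases "norm z = 0")
    case True then show ?thesis using assms(3) by simp
  next
    case False
    then have "c * norm z \<le> norm x" using 1 by (simp add: power2_eq_square)
    then show ?thesis using assms(3) by (simp add: field_simps)
  qed
  then have "norm x * norm z \<le> norm x * (norm x / c)" by (metis mult_left_mono norm_ge_zero)
  then have "x \<bullet> z \<le> (norm x)^2 / c" using norm_cauchy_schwarz[of x z] by (simp add: power2_eq_square)
  then show ?thesis using q by (simp add: power2_norm_eq_inner)
qed



lemma outer_mult: "outer a *v x = (a \<bullet> x) *\<^sub>R a"
  by (simp add: outer_def vec_eq_iff matrix_vector_mult_def inner_vec_def sum_distrib_left sum_distrib_right mult_ac)

lemma sum_mat_mult: "(\<Sum>i\<in>S. (f i :: real^'n^'n)) *v x = (\<Sum>i\<in>S. f i *v x)"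
  by (induction S rule: infinite_finite_induct) (auto simp: matrix_vector_mult_add_rdistrib)

lemma Amat_mult: "Amat e phi a t *v x = e t *\<^sub>R x + phi *\<^sub>R (\<Sum>\<tau>\<in>{1..t}. (a \<tau> \<bullet> x) *\<^sub>R a \<tau>)"
  unfolding Amat_def
  by (simp add: matrix_vector_mult_add_rdistrib flip: scaleR_matrix_vector_assoc add: sum_mat_mult outer_mult)

lemma Amat_quad: "x \<bullet> (Amat e phi a t *v x) = e t * (x \<bullet> x) + phi * (\<Sum>\<tau>\<in>{1..t}. (a \<tau> \<bullet> x)^2)"
  unfolding Amat_mult by (simp add: inner_add_right inner_sum_right power2_eq_square inner_commute)

lemma symm_Amat: "symm (Amat e phi a t)"
  unfolding symm_def Amat_def
  by (simp add: vec_eq_iff transpose_def outer_def mat_def mult.commute)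



lemma row_eq_nth: "row i A = A $ i" by (simp add: row_def vec_eq_iff)

lemma det_row_base:
  fixes v :: "real^'n"
  shows "det (\<chi> i. if i = k then v else axis i 1) = v$k"
proof -
  define A :: "real^'n^'n" where "A = (\<chi> i. if i = k then v$k *s axis k 1 else axis i 1)"
  define x where "x = (\<Sum>j\<in>UNIV-{k}. v$j *s axis j (1::real))"
  have rowA: "row i A = A $ i" for i by (simp add: row_def vec_eq_iff)
  have "x \<in> vec.span {row j A |j. j \<noteq> k}"
    unfolding x_def
  proof (rule vec.span_sum)
    fix j assume "j \<in> UNIV - {k}"
    then have "axis j 1 \<in> {row j A |j. j \<noteq> k}"
      by (intro CollectI exI[of _ j]) (simp add: row_def A_def vec_eq_iff)
    then show "v$j *s axis j 1 \<in> vec.span {row j A |j. j \<noteq> k}"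
      by (intro vec.span_scale vec.span_base)
  qed
  from det_row_span[OF this] have 1: "det (\<chi> r. if r = k then row k A + x else row r A) = det A" .
  have e: "row k A + x = v"
  proof -
    have "row k A + x = (\<Sum>j\<in>UNIV. v$j *s axis j (1::real))"
      unfolding x_def row_eq_nth A_def
      by (simp add: sum.remove[of UNIV k])
    also have "\<dots> = v" by (simp add: vec_eq_iff axis_def sum_component if_distrib cong: if_cong)
    finally show ?thesis .
  qed
  have 2: "(\<chi> r. if r = k then row k A + x else row r A) = (\<chi> i. if i = k then v else axis i 1)"
  proof -
    have e2: "A $ k + x = v" using e by (simp only: row_eq_nth)
    show ?thesis apply (simp only: row_eq_nth e2) by (simp add: A_def vec_eq_iff)
  qed
  have "det A = v$k"
    by (subst det_diagonal) (auto simp: A_def axis_def prod.remove[of UNIV k])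
  then show ?thesis using 1 2 by simp
qed

lemma det_row_R2:
  fixes v :: "real^'n"
  assumes "k \<notin> S"
  shows "det (\<chi> i. if i = k then v else if i \<in> S then axis i 1 + c i *s v else axis i 1) = v$k"
  using assms
proof (induction S rule: infinite_finite_induct)
  case (infinite S) then show ?case by simp
next
  case empty then show ?case by (simp only: empty_iff if_False) (rule det_row_base)
next
  case (insert j S)
  define A :: "real^'n^'n" where
    "A = (\<chi> i. if i = k then v else if i \<in> insert j S then axis i 1 + c i *s v else axis i 1)"
  have rowA: "row i A = A $ i" for i by (simp add: row_def vec_eq_iff)
  have jk: "j \<noteq> k" using insert by auto
  have "det (\<chi> r. if r = j then row j A + (- c j) *s row k A else row r A) = det A"
    by (rule det_row_operation[OF jk])
  moreover have "(\<chi> r. if r = j then row j A + (- c j) *s row k A else row r A)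
      = (\<chi> i. if i = k then v else if i \<in> S then axis i 1 + c i *s v else axis i 1)"
    using insert jk unfolding row_eq_nth A_def by (auto simp: vec_eq_iff)
  ultimately show ?case using insert A_def by auto
qed

lemma det_row_R1:
  fixes u v :: "real^'n"
  shows "det (\<chi> i. if i \<in> T then axis i 1 + u$i *s v else axis i 1) = 1 + (\<Sum>i\<in>T. u$i * v$i)"
proof (induction T rule: infinite_finite_induct)
  case (infinite T) then show ?case by simp
next
  case empty
  have "(\<chi> i. axis i 1) = (mat 1 :: real^'n^'n)" by (simp add: vec_eq_iff mat_def axis_def)
  then show ?case by simp
next
  case (insert k T)
  define C where "C = (\<lambda>i. if i \<in> T then axis i 1 + u$i *s v else axis i (1::real))"
  have m: "(\<chi> i. if i \<in> insert k T then axis i 1 + u$i *s v else axis i 1)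
      = (\<chi> i. if i = k then axis k 1 + u$k *s v else C i)"
    by (simp add: C_def vec_eq_iff)
  have m1: "(\<chi> i. if i = k then axis k 1 else C i) = (\<chi> i. if i \<in> T then axis i 1 + u$i *s v else axis i 1)"
    using insert by (simp add: C_def vec_eq_iff)
  have m2: "det (\<chi> i. if i = k then v else C i) = v$k"
    unfolding C_def using det_row_R2[of k T v "\<lambda>i. u$i"] insert by simp
  show ?case
    unfolding m det_row_add det_row_mul m1 m2 using insert by simp
qed

lemma det_rank1:
  fixes u v :: "real^'n"
  shows "det (mat 1 + (\<chi> i j. u$i * v$j)) = 1 + u \<bullet> v"
proof -
  have "mat 1 + (\<chi> i j. u$i * v$j) = (\<chi> i. if i \<in> UNIV then axis i 1 + u$i *s v else axis i 1)"
    by (simp add: vec_eq_iff mat_def axis_def)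
  then show ?thesis using det_row_R1[of UNIV u v] by (simp add: inner_vec_def)
qed



lemma pd_Amat:
  assumes "e t > 0" "phi \<ge> 0" shows "pd (Amat e phi a t)"
  unfolding pd_def
proof (intro conjI allI impI)
  show "symm (Amat e phi a t)" by (rule symm_Amat)
  fix x :: "real^'a" assume "x \<noteq> 0"
  then have "x \<bullet> x > 0" by simp
  moreover have "phi * (\<Sum>\<tau>\<in>{1..t}. (a \<tau> \<bullet> x)^2) \<ge> 0" using assms by (simp add: sum_nonneg)
  ultimately show "x \<bullet> (Amat e phi a t *v x) > 0" unfolding Amat_quad using assms
    by (simp add: add_pos_nonneg)
qed

lemma Amat_const_Suc:
  "Amat (\<lambda>_. c) phi a (Suc t) = Amat (\<lambda>_. c) phi a t + phi *\<^sub>R outer (a (Suc t))"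
  unfolding Amat_def by (simp add: scaleR_add_right)

lemma mult_outer_like:
  fixes B :: "real^'n^'n"
  shows "B ** (\<chi> i j. z$i * w$j) = (\<chi> i j. (B *v z)$i * w$j)"
  by (simp add: vec_eq_iff matrix_matrix_mult_def matrix_vector_mult_def sum_distrib_left mult_ac)

lemma det_update:
  fixes B :: "real^'n^'n"
  assumes "pd B"
  shows "det (B + phi *\<^sub>R outer a) = det B * (1 + phi * qf B a)"
proof -
  have inv: "invertible B" using pd_invertible assms by blast
  define z where "z = matrix_inv B *v a"
  have Bz: "B *v z = a" unfolding z_def using matrix_inv_apply[OF inv] by simp
  have "B ** (mat 1 + (\<chi> i j. z$i * (phi *\<^sub>R a)$j)) = B + phi *\<^sub>R outer a"
    unfolding matrix_add_ldistrib mult_outer_like Bz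
    by (simp add: outer_def vec_eq_iff mult_ac)
  then have "det (B + phi *\<^sub>R outer a) = det B * (1 + z \<bullet> (phi *\<^sub>R a))"
    by (metis det_mul det_rank1)
  then show ?thesis unfolding qf_def z_def by (simp add: inner_commute)
qed

lemma qf_update:
  fixes B :: "real^'n^'n"
  assumes "pd B" "pd (B + phi *\<^sub>R outer a)" "phi \<ge> 0"
  shows "qf (B + phi *\<^sub>R outer a) a = qf B a / (1 + phi * qf B a)"
proof -
  have inv: "invertible B" using pd_invertible assms by blast
  have inv': "invertible (B + phi *\<^sub>R outer a)" using pd_invertible assms by blast
  define z where "z = matrix_inv B *v a"
  have Bz: "B *v z = a" unfolding z_def using matrix_inv_apply[OF inv] by simp
  have q: "qf B a = a \<bullet> z" unfolding qf_def z_def ..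
  have q0: "qf B a \<ge> 0" using qf_nonneg assms by blast
  define x where "x = phi * qf B a"
  have x0: "1 + x > 0" using mult_nonneg_nonneg[OF assms(3) q0] x_def by simp
  have "(B + phi *\<^sub>R outer a) *v ((1/(1+x)) *\<^sub>R z) = (1/(1+x)) *\<^sub>R (a + (phi * (a \<bullet> z)) *\<^sub>R a)"
    by (simp add: matrix_vector_mult_add_rdistrib matrix_vector_mult_scaleR Bz
        flip: scaleR_matrix_vector_assoc add: outer_mult)
  also have "\<dots> = a"
  proof -
    have "a + (phi * (a \<bullet> z)) *\<^sub>R a = (1 + phi * (a \<bullet> z)) *\<^sub>R a" by (simp add: algebra_simps)
    then show ?thesis using x0 unfolding x_def q by simp
  qed
  finally have "matrix_inv (B + phi *\<^sub>R outer a) *v a = (1/(1+x)) *\<^sub>R z"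
    by (rule matrix_inv_solve[OF inv'])
  then have "qf (B + phi *\<^sub>R outer a) a = (a \<bullet> z) / (1 + x)" unfolding qf_def by simp
  then show ?thesis using q x_def by simp
qed



definition f_q :: "real^'n^'n \<Rightarrow> real^'n \<Rightarrow> real" where
  "f_q A x = x \<bullet> (A *v x)"

lemma f_q_scale: "f_q A (c *\<^sub>R x) = c^2 * f_q A x"
  by (simp add: f_q_def matrix_vector_mult_scaleR power2_eq_square)

lemma eigen_in_subspace:
  fixes A :: "real^'n^'n"
  assumes sy: "symm A" and S: "subspace S" and inv: "\<And>x. x \<in> S \<Longrightarrow> A *v x \<in> S"
    and x0: "x0 \<in> S" "x0 \<noteq> 0"
  shows "\<exists>v\<in>S. norm v = 1 \<and> A *v v = (v \<bullet> (A *v v)) *\<^sub>R v"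
proof -
  let ?K = "S \<inter> sphere 0 1"
  have cK: "compact ?K" using closed_Int_compact[OF closed_subspace[OF S] compact_sphere] .
  have "x0 /\<^sub>R norm x0 \<in> ?K" using x0 S by (simp add: subspace_scale)
  then have ne: "?K \<noteq> {}" by blast
  have ct: "continuous_on ?K (f_q A)" unfolding f_q_def
    by (intro continuous_intros continuous_on_compose2[OF matrix_vector_mult_linear_continuous_on] ) auto
  obtain v where vK: "v \<in> ?K" and vmax: "\<And>y. y \<in> ?K \<Longrightarrow> f_q A y \<le> f_q A v"
    using continuous_attains_sup[OF cK ne ct] by blast
  define lam where "lam = f_q A v"
  have vS: "v \<in> S" and nv: "norm v = 1" using vK by auto
  have vv: "v \<bullet> v = 1" using nv by (simp add: norm_eq_1)
  have bound: "f_q A y \<le> lam * (y \<bullet> y)" if "y \<in> S" for y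
  proof (cases "y = 0")
    case True then show ?thesis by (simp add: f_q_def)
  next
    case False
    have "(1 / norm y) *\<^sub>R y \<in> ?K" using that False S by (simp add: subspace_scale)
    then have "f_q A ((1 / norm y) *\<^sub>R y) \<le> lam" using vmax lam_def by blast
    then have "(1/norm y)^2 * f_q A y \<le> lam" by (simp add: f_q_scale)
    then have "f_q A y \<le> lam * (norm y)^2" using False
      by (simp add: field_simps power2_eq_square)
    then show ?thesis by (simp add: power2_norm_eq_inner)
  qed
  define w where "w = A *v v - lam *\<^sub>R v"
  have wS: "w \<in> S" unfolding w_def using inv[OF vS] vS S by (simp add: subspace_diff subspace_scale)
  have vw: "v \<bullet> w = 0" unfolding w_def lam_def f_q_def using vv by (simp add: inner_diff_right)
  have wAv: "w \<bullet> (A *v v) = w \<bullet> w"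
  proof -
    have "A *v v = w + lam *\<^sub>R v" unfolding w_def by simp
    then show ?thesis using vw by (simp add: inner_add_right inner_commute)
  qed
  have key: "2 * e * (w \<bullet> w) + e^2 * f_q A w \<le> lam * e^2 * (w \<bullet> w)" for e
  proof -
    have yS: "v + e *\<^sub>R w \<in> S" using vS wS S by (simp add: subspace_add subspace_scale)
    have "f_q A (v + e *\<^sub>R w) = lam + 2 * e * (w \<bullet> (A *v v)) + e^2 * f_q A w"
      unfolding f_q_def lam_def using symm_inner[OF sy, of v w]
      by (simp add: matrix_vector_mult_add_rdistrib matrix_vector_right_distrib
          matrix_vector_mult_scaleR inner_add_left inner_add_right power2_eq_square algebra_simps)
    moreover have "(v + e *\<^sub>R w) \<bullet> (v + e *\<^sub>R w) = 1 + e^2 * (w \<bullet> w)"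
      using vv vw by (simp add: inner_add_left inner_add_right inner_commute power2_eq_square)
    ultimately show ?thesis using bound[OF yS] wAv by (simp add: algebra_simps)
  qed
  have "w \<bullet> w = 0"
  proof (rule ccontr)
    assume "w \<bullet> w \<noteq> 0"
    then have wp: "w \<bullet> w > 0" by (simp add: order_less_le)
    define C where "C = lam * (w \<bullet> w) - f_q A w"
    have "2 * (w \<bullet> w) \<le> C" using key[of 1] C_def by (simp add: algebra_simps)
    then have Cp: "C > 0" using wp by linarith
    have key2: "2 * e * (w \<bullet> w) \<le> e^2 * C" for e
      using key[of e] unfolding C_def by (simp add: algebra_simps)
    have "2 * ((w \<bullet> w) / C) * (w \<bullet> w) \<le> ((w \<bullet> w) / C)^2 * C"
      using key2[of "(w \<bullet> w) / C"] by simp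
    then have "2 * (w \<bullet> w)^2 / C \<le> (w \<bullet> w)^2 / C" using Cp
      by (simp add: power2_eq_square field_simps)
    then show False using wp Cp by (simp add: divide_le_cancel)
  qed
  then have "w = 0" by simp
  then have "A *v v = lam *\<^sub>R v" unfolding w_def by simp
  then show ?thesis using vS nv lam_def f_q_def by metis
qed

lemma eigenbasis_k:
  fixes A :: "real^'n^'n"
  assumes sy: "symm A" and "k \<le> CARD('n)"
  shows "\<exists>V. finite V \<and> card V = k \<and> pairwise orthogonal V \<and>
     (\<forall>v\<in>V. norm v = 1 \<and> A *v v = (v \<bullet> (A *v v)) *\<^sub>R v)"
  using assms(2)
proof (induction k)
  case 0 then show ?case by (intro exI[of _ "{}"]) auto
next
  case (Suc k)
  then obtain V where V: "finite V" "card V = k" "pairwise orthogonal V"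
     "\<forall>v\<in>V. norm v = 1 \<and> A *v v = (v \<bullet> (A *v v)) *\<^sub>R v" by auto
  have "dim V < DIM(real^'n)" using dim_le_card[OF order_refl V(1)] V(2) Suc(2) by simp
  then obtain x where x: "x \<noteq> 0" "\<And>y. y \<in> span V \<Longrightarrow> orthogonal x y"
    using orthogonal_to_subspace_exists by blast
  define S where "S = {y. \<forall>v\<in>V. orthogonal v y}"
  have S: "subspace S" unfolding S_def by (rule subspace_orthogonal_to_vectors)
  have xS: "x \<in> S" unfolding S_def using x(2) span_base orthogonal_commute by blast
  have invS: "A *v y \<in> S" if "y \<in> S" for y
  proof -
    have "orthogonal v (A *v y)" if "v \<in> V" for v
    proof -
      have "v \<bullet> (A *v y) = y \<bullet> (A *v v)" by (rule symm_inner[OF sy])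
      also have "\<dots> = (v \<bullet> (A *v v)) * (y \<bullet> v)" using V(4) \<open>v \<in> V\<close> by (metis inner_scaleR_right)
      also have "y \<bullet> v = 0" using \<open>y \<in> S\<close> \<open>v \<in> V\<close> unfolding S_def orthogonal_def by (simp add: inner_commute)
      finally show ?thesis unfolding orthogonal_def by simp
    qed
    then show ?thesis unfolding S_def by blast
  qed
  obtain u where u: "u \<in> S" "norm u = 1" "A *v u = (u \<bullet> (A *v u)) *\<^sub>R u"
    using eigen_in_subspace[OF sy S invS xS x(1)] by blast
  have uV: "u \<notin> V"
  proof
    assume "u \<in> V"
    then have "orthogonal u u" using u(1) S_def by blast
    then show False using u(2) by (simp add: orthogonal_def)
  qed
  have "pairwise orthogonal (insert u V)"
    using V(3) u(1) unfolding S_def pairwise_insert by (auto simp: orthogonal_commute)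
  then show ?case using V uV u by (intro exI[of _ "insert u V"]) auto
qed



lemma pd_spectral:
  fixes A :: "real^'n^'n"
  assumes "pd A"
  obtains mu :: "'n \<Rightarrow> real" where "\<And>j. mu j > 0" "det A = (\<Prod>j\<in>UNIV. mu j)"
     "trace A = (\<Sum>j\<in>UNIV. mu j)"
proof -
  have sy: "symm A" using assms pd_def by blast
  obtain V where V: "finite V" "card V = CARD('n)" "pairwise orthogonal V"
     "\<forall>v\<in>V. norm v = 1 \<and> A *v v = (v \<bullet> (A *v v)) *\<^sub>R v"
    using eigenbasis_k[OF sy order_refl] by blast
  obtain h where h: "bij_betw h (UNIV::'n set) V"
    using finite_same_card_bij[of "UNIV::'n set" V] V by auto
  have hV: "h j \<in> V" for j using h bij_betwE by blast
  have hinj: "h j = h k \<Longrightarrow> j = k" for j k using h by (metis bij_betw_imp_inj_on inj_eq UNIV_I)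
  have orth: "h j \<bullet> h k = (if j = k then 1 else 0)" for j k
  proof (cases "j = k")
    case True then show ?thesis using V(4) hV[of j] by (simp add: norm_eq_1)
  next
    case False then have "h j \<noteq> h k" using hinj by blast
    then show ?thesis using V(3) hV False unfolding pairwise_def orthogonal_def by auto
  qed
  define mu where "mu j = h j \<bullet> (A *v h j)" for j
  have eig: "A *v h j = mu j *\<^sub>R h j" for j using V(4) hV[of j] mu_def by auto
  have mupos: "mu j > 0" for j
  proof -
    have "h j \<noteq> 0" using V(4) hV[of j] by auto
    then show ?thesis using assms unfolding pd_def mu_def by blast
  qed
  define Q :: "real^'n^'n" where "Q = (\<chi> i j. (h j)$i)"
  have QtQ: "transpose Q ** Q = mat 1"
    by (simp add: vec_eq_iff matrix_matrix_mult_def transpose_def Q_def mat_def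
        orth[symmetric] inner_vec_def)
  then have QQt: "Q ** transpose Q = mat 1" using matrix_left_right_inverse by blast
  have AQ: "A ** Q = (\<chi> i k. mu k * (h k)$i)"
  proof -
    have "(A ** Q)$i$k = (A *v h k)$i" for i k
      by (simp add: matrix_matrix_mult_def matrix_vector_mult_def Q_def)
    then show ?thesis using eig by (simp add: vec_eq_iff)
  qed
  define D where "D = transpose Q ** (A ** Q)"
  have Djk: "D$j$k = (if j = k then mu k else 0)" for j k
  proof -
    have "D$j$k = mu k * (h j \<bullet> h k)"
      unfolding D_def AQ by (simp add: matrix_matrix_mult_def transpose_def Q_def inner_vec_def
          sum_distrib_left mult_ac)
    then show ?thesis using orth by simp
  qed
  have "det D = (\<Prod>j\<in>UNIV. mu j)" by (subst det_diagonal) (auto simp: Djk)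
  moreover have "det D = det A"
  proof -
    have "det Q * det Q = 1" using QtQ by (metis det_I det_mul det_transpose)
    moreover have "det D = det Q * det A * det Q" by (simp add: D_def det_mul)
    ultimately show ?thesis by (simp add: algebra_simps)
  qed
  moreover have "trace D = (\<Sum>j\<in>UNIV. mu j)" by (simp add: trace_def Djk)
  moreover have "trace D = trace A"
  proof -
    have "trace D = trace ((A ** Q) ** transpose Q)" unfolding D_def by (rule trace_mul_sym)
    also have "\<dots> = trace A" by (simp only: matrix_mul_assoc[symmetric] QQt matrix_mul_rid)
    finally show ?thesis .
  qed
  ultimately show ?thesis using that mupos by metis
qed

lemma logdet_bound:
  fixes A :: "real^'n^'n"
  assumes "pd A"
  shows "det A > 0" "ln (det A) \<le> real CARD('n) * ln (trace A / real CARD('n))"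
proof -
  obtain mu :: "'n \<Rightarrow> real" where mu: "\<And>j. mu j > 0" "det A = (\<Prod>j\<in>UNIV. mu j)"
     "trace A = (\<Sum>j\<in>UNIV. mu j)" using pd_spectral[OF assms] by blast
  show "det A > 0" using mu by (simp add: prod_pos)
  define n where "n = real CARD('n)"
  have n0: "n > 0" unfolding n_def by simp
  define c where "c = trace A / n"
  have c0: "c > 0" unfolding c_def mu(3) using mu(1) n0
    by (intro divide_pos_pos sum_pos) auto
  have "ln (det A) = (\<Sum>j\<in>UNIV. ln (mu j))" unfolding mu(2) using mu(1) by (subst ln_prod) (auto simp: less_imp_neq[symmetric])
  also have "\<dots> \<le> (\<Sum>j\<in>UNIV. ln c + (mu j / c - 1))"
  proof (rule sum_mono)
    fix j
    have "ln (mu j / c) \<le> mu j / c - 1" using mu(1)[of j] c0 by (intro ln_le_minus_one) simp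
    then show "ln (mu j) \<le> ln c + (mu j / c - 1)" using mu(1)[of j] c0 by (simp add: ln_div)
  qed
  also have "\<dots> = n * ln c + (trace A / c - n)"
    unfolding mu(3) n_def by (simp add: sum.distrib sum_subtractf sum_divide_distrib)
  also have "trace A / c = n" unfolding c_def using n0 c0 c_def by (simp add: field_simps)
  finally show "ln (det A) \<le> real CARD('n) * ln (trace A / real CARD('n))" unfolding c_def n_def by simp
qed



lemma mset_delay_sub:
  assumes "t \<le> N" "\<tau> \<in> mset_delay d t"
  shows "1 \<le> \<tau>" "\<tau> < t" "t - \<tau> \<le> dmax d N"
proof -
  from assms(2) have h: "1 \<le> \<tau>" "\<tau> \<le> t - 1" "\<tau> + d \<tau> \<ge> t" unfolding mset_delay_def by auto
  then show "1 \<le> \<tau>" "\<tau> < t" by auto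
  have tN: "\<tau> \<in> {1..N}" using h assms(1) by auto
  have "min (d \<tau>) (N - \<tau>) \<le> dmax d N" unfolding dmax_def
    using tN by (intro Max_ge) auto
  moreover have "t - \<tau> \<le> min (d \<tau>) (N - \<tau>)" using h assms(1) by auto
  ultimately show "t - \<tau> \<le> dmax d N" by linarith
qed

lemma card_m_le:
  assumes "t \<le> N" shows "card (mset_delay d t) \<le> dmax d N"
proof -
  have "mset_delay d t \<subseteq> {t - dmax d N..<t}"
    using mset_delay_sub[OF assms] by fastforce
  then have "card (mset_delay d t) \<le> card {t - dmax d N..<t}" by (intro card_mono) auto
  then show ?thesis by simp
qed

lemma card_rev_le:
  "card {t\<in>{1..N}. \<tau> \<in> mset_delay d t} \<le> dmax d N"
proof -
  have "{t\<in>{1..N}. \<tau> \<in> mset_delay d t} \<subseteq> {\<tau>+1..\<tau> + dmax d N}"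
  proof
    fix t assume "t \<in> {t\<in>{1..N}. \<tau> \<in> mset_delay d t}"
    then have "t \<le> N" "\<tau> \<in> mset_delay d t" by auto
    from mset_delay_sub[OF this] show "t \<in> {\<tau>+1..\<tau> + dmax d N}" by auto
  qed
  then have "card {t\<in>{1..N}. \<tau> \<in> mset_delay d t} \<le> card {\<tau>+1..\<tau> + dmax d N}" by (intro card_mono) auto
  then show ?thesis by simp
qed

lemma comb_bound:
  fixes W :: "nat \<Rightarrow> real" and U :: "nat \<Rightarrow> nat \<Rightarrow> real"
  assumes W0: "\<And>t. t \<in> {1..N} \<Longrightarrow> W t \<ge> 0"
    and U: "\<And>t \<tau>. t \<in> {1..N} \<Longrightarrow> \<tau> \<in> mset_delay d t \<Longrightarrow> U t \<tau> \<le> W \<tau>"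
  shows "(\<Sum>t=1..N. W t * (\<Sum>\<tau>\<in>mset_delay d t. U t \<tau>)) \<le> 2 * real (dmax d N) * (\<Sum>t=1..N. (W t)^2)"
proof -
  let ?D = "real (dmax d N)"
  let ?m = "mset_delay d"
  have fin: "finite (?m t)" for t unfolding mset_delay_def by auto
  have msub: "?m t \<subseteq> {1..N}" if "t \<in> {1..N}" for t using mset_delay_sub[of t N] that by fastforce
  have "(\<Sum>t=1..N. W t * (\<Sum>\<tau>\<in>?m t. U t \<tau>)) \<le> (\<Sum>t=1..N. (\<Sum>\<tau>\<in>?m t. (W t)^2 + (W \<tau>)^2))"
  proof (rule sum_mono)
    fix t assume t: "t \<in> {1..N}"
    have "W t * (\<Sum>\<tau>\<in>?m t. U t \<tau>) \<le> W t * (\<Sum>\<tau>\<in>?m t. W \<tau>)"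
      using U t W0[OF t] by (intro mult_left_mono sum_mono) auto
    also have "\<dots> = (\<Sum>\<tau>\<in>?m t. W t * W \<tau>)" by (simp add: sum_distrib_left)
    also have "\<dots> \<le> (\<Sum>\<tau>\<in>?m t. (W t)^2 + (W \<tau>)^2)"
    proof (rule sum_mono)
      fix \<tau> assume "\<tau> \<in> ?m t"
      then have tau: "\<tau> \<in> {1..N}" using msub t by blast
      have "0 \<le> (W t - W \<tau>)^2" by simp
      then have "2 * (W t * W \<tau>) \<le> (W t)^2 + (W \<tau>)^2" by (simp add: power2_eq_square algebra_simps)
      moreover have "0 \<le> W t * W \<tau>" using W0[OF t] W0[OF tau] by simp
      ultimately show "W t * W \<tau> \<le> (W t)^2 + (W \<tau>)^2" by linarith
    qed
    finally show "W t * (\<Sum>\<tau>\<in>?m t. U t \<tau>) \<le> (\<Sum>\<tau>\<in>?m t. (W t)^2 + (W \<tau>)^2)" .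
  qed
  also have "\<dots> = (\<Sum>t=1..N. real (card (?m t)) * (W t)^2) + (\<Sum>t=1..N. \<Sum>\<tau>\<in>?m t. (W \<tau>)^2)"
    by (simp add: sum.distrib)
  also have "(\<Sum>t=1..N. real (card (?m t)) * (W t)^2) \<le> (\<Sum>t=1..N. ?D * (W t)^2)"
    using card_m_le by (intro sum_mono mult_right_mono) auto
  also have "(\<Sum>t=1..N. \<Sum>\<tau>\<in>?m t. (W \<tau>)^2) = (\<Sum>t=1..N. \<Sum>\<tau>=1..N. if \<tau> \<in> ?m t then (W \<tau>)^2 else 0)"
  proof (rule sum.cong[OF refl])
    fix t assume "t \<in> {1..N}"
    then show "(\<Sum>\<tau>\<in>?m t. (W \<tau>)^2) = (\<Sum>\<tau>=1..N. if \<tau> \<in> ?m t then (W \<tau>)^2 else 0)"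
      using msub by (simp add: sum.inter_restrict[symmetric] Int_absorb1)
  qed
  also have "\<dots> = (\<Sum>\<tau>=1..N. \<Sum>t=1..N. if \<tau> \<in> ?m t then (W \<tau>)^2 else 0)" by (rule sum.swap)
  also have "\<dots> = (\<Sum>\<tau>=1..N. real (card {t\<in>{1..N}. \<tau> \<in> ?m t}) * (W \<tau>)^2)"
  proof (rule sum.cong[OF refl])
    fix \<tau>
    have "{1..N} \<inter> {t. \<tau> \<in> ?m t} = {t\<in>{1..N}. \<tau> \<in> ?m t}" by auto
    then show "(\<Sum>t=1..N. if \<tau> \<in> ?m t then (W \<tau>)^2 else 0) = real (card {t\<in>{1..N}. \<tau> \<in> ?m t}) * (W \<tau>)^2"
      by (simp add: sum.If_cases)
  qed
  also have "\<dots> \<le> (\<Sum>\<tau>=1..N. ?D * (W \<tau>)^2)"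
    using card_rev_le by (intro sum_mono mult_right_mono) auto
  finally show ?thesis by (simp add: sum_distrib_left[symmetric])
qed



lemma Amat_diag: "(Amat e phi a t) $ i $ i = e t + phi * (\<Sum>\<tau>\<in>{1..t}. (a \<tau> $ i)^2)"
  unfolding Amat_def by (simp add: outer_def mat_def sum_component power2_eq_square)

lemma trace_Amat: "trace (Amat e phi a t) = real CARD('n) * e t + phi * (\<Sum>\<tau>\<in>{1..t}. (norm (a \<tau> :: real^'n))^2)"
proof -
  have "trace (Amat e phi a t) = (\<Sum>i\<in>UNIV. e t + phi * (\<Sum>\<tau>\<in>{1..t}. (a \<tau> $ i)^2))"
    unfolding trace_def Amat_diag ..
  also have "\<dots> = real CARD('n) * e t + phi * (\<Sum>\<tau>\<in>{1..t}. \<Sum>i\<in>UNIV. (a \<tau> $ i)^2)"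
    by (simp add: sum.distrib sum_distrib_left sum.swap[of _ UNIV])
  also have "(\<Sum>\<tau>\<in>{1..t}. \<Sum>i\<in>UNIV. (a \<tau> $ i)^2) = (\<Sum>\<tau>\<in>{1..t}. (norm (a \<tau>))^2)"
  proof (rule sum.cong[OF refl])
    fix \<tau>
    have "a \<tau> \<bullet> a \<tau> = (\<Sum>i\<in>UNIV. (a \<tau> $ i)^2)" by (simp add: inner_vec_def power2_eq_square)
    then show "(\<Sum>i\<in>UNIV. (a \<tau> $ i)^2) = (norm (a \<tau>))^2" by (simp add: power2_norm_eq_inner)
  qed
  finally show ?thesis .
qed

lemma det_scalar: "det (c *\<^sub>R (mat 1 :: real^'n^'n)) = c ^ CARD('n)"
  by (subst det_diagonal) (auto simp: mat_def)

lemma potential: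
  fixes a :: "nat \<Rightarrow> real^'n" and e0 phi L :: real and N :: nat
  assumes e0: "e0 > 0" and ph: "phi > 0" and aL: "\<And>t. t \<in> {1..N} \<Longrightarrow> norm (a t) \<le> L"
  shows "(\<Sum>t=1..N. ln (1 + phi * qf (Amat (\<lambda>_. e0) phi a (t-1)) (a t)))
     \<le> real CARD('n) * ln (1 + phi * L^2 * real N / (e0 * real CARD('n)))"
proof -
  define B where "B t = Amat (\<lambda>_. e0) phi a t" for t
  define n where "n = real CARD('n)"
  have n0: "n > 0" unfolding n_def by simp
  have pdB: "pd (B t)" for t unfolding B_def using e0 ph by (intro pd_Amat) auto
  have xnn: "phi * qf (B t) v \<ge> 0" for t v using qf_nonneg[OF pdB] ph by simp
  have ind: "ln (det (B m)) = n * ln e0 + (\<Sum>t=1..m. ln (1 + phi * qf (B (t-1)) (a t)))" for m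
  proof (induction m)
    case 0
    have "B 0 = e0 *\<^sub>R mat 1" unfolding B_def Amat_def by simp
    then show ?case unfolding n_def using e0 by (simp add: det_scalar ln_realpow)
  next
    case (Suc m)
    have "B (Suc m) = B m + phi *\<^sub>R outer (a (Suc m))" unfolding B_def by (rule Amat_const_Suc)
    then have "det (B (Suc m)) = det (B m) * (1 + phi * qf (B m) (a (Suc m)))"
      using det_update[OF pdB] by simp
    moreover have "det (B m) > 0" using logdet_bound(1)[OF pdB] .
    moreover have "1 + phi * qf (B m) (a (Suc m)) > 0" using xnn[of m "a (Suc m)"] by linarith
    ultimately have "ln (det (B (Suc m))) = ln (det (B m)) + ln (1 + phi * qf (B m) (a (Suc m)))"
      by (simp add: ln_mult)
    then show ?case using Suc by simp
  qed
  have tr: "trace (B N) \<le> n * e0 + phi * (real N * L^2)"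
  proof -
    have "(\<Sum>\<tau>\<in>{1..N}. (norm (a \<tau>))^2) \<le> (\<Sum>\<tau>\<in>{1..N}. L^2)"
      using aL by (intro sum_mono power_mono) auto
    then show ?thesis unfolding B_def trace_Amat n_def using ph by simp
  qed
  have trpos: "trace (B N) > 0"
  proof -
    have "trace (B N) \<ge> n * e0" unfolding B_def trace_Amat n_def using ph
      by (simp add: sum_nonneg)
    then show ?thesis using n0 e0 by (smt (verit) mult_pos_pos)
  qed
  have "(\<Sum>t=1..N. ln (1 + phi * qf (B (t-1)) (a t))) = ln (det (B N)) - n * ln e0" using ind[of N] by simp
  also have "\<dots> \<le> n * ln (trace (B N) / n) - n * ln e0" using logdet_bound(2)[OF pdB, of N] n_def by simp
  also have "\<dots> = n * ln (trace (B N) / (n * e0))"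
    using trpos n0 e0 by (simp add: ln_div ln_mult algebra_simps)
  also have "\<dots> \<le> n * ln (1 + phi * L^2 * real N / (e0 * n))"
  proof -
    have "trace (B N) / (n * e0) \<le> 1 + phi * L^2 * real N / (e0 * n)"
      using tr n0 e0 by (simp add: field_simps)
    then show ?thesis using n0 trpos e0 by (intro mult_left_mono ln_mono) auto
  qed
  finally show ?thesis unfolding B_def n_def .
qed



lemma ln_lower: "x \<ge> 0 \<Longrightarrow> x / (1 + x) \<le> ln (1 + (x::real))"
proof -
  assume x: "x \<ge> 0"
  have "ln (1 / (1 + x)) \<le> 1 / (1 + x) - 1" using x by (intro ln_le_minus_one) simp
  then have "- ln (1 + x) \<le> - x / (1 + x)" using x by (simp add: ln_div field_simps)
  then show ?thesis by simp
qed

theorem lemmaC1: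
  fixes N :: nat and phi L :: real and eta :: "nat \<Rightarrow> real"
    and a :: "nat \<Rightarrow> real^'n" and d :: "nat \<Rightarrow> nat"
  assumes "N \<ge> 1" and "phi > 0" and "L > 0"
    and "eta 0 > 0" and "\<And>s t. s \<le> t \<Longrightarrow> t \<le> N \<Longrightarrow> eta s \<le> eta t"
    and "\<And>t. t \<in> {1..N} \<Longrightarrow> norm (a t) \<le> L"
  shows "((\<Sum>t=1..N. inv_norm (Amat eta phi a (t-1)) (a t) *
            (\<Sum>\<tau>\<in>mset_delay d t. inv_norm (Amat eta phi a (t-1)) (a \<tau>)))
         \<le> 2 * real CARD('n) * real (dmax d N) / phi * (phi * L^2 / eta 0 + 1)
            * ln (1 + phi * L^2 * real N / (eta 0 * real CARD('n))))
       \<and> ((\<Sum>t=1..N. inv_norm (Amat eta phi a t) (a t) *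
            (\<Sum>\<tau>\<in>mset_delay d t. inv_norm (Amat eta phi a t) (a \<tau>)))
         \<le> 2 * real CARD('n) * real (dmax d N) / phi
            * ln (1 + phi * L^2 * real N / (eta 0 * real CARD('n))))"
proof -
  note ph = assms(2) and e0 = assms(4) and mono = assms(5) and aL = assms(6)
  define A where "A t = Amat eta phi a t" for t
  define B where "B t = Amat (\<lambda>_. eta 0) phi a t" for t
  define x where "x t = phi * qf (B (t-1)) (a t)" for t
  define n where "n = real CARD('n)"
  define D where "D = real (dmax d N)"
  define K where "K = phi * L^2 / eta 0"
  define P where "P = ln (1 + phi * L^2 * real N / (eta 0 * n))"
  have D0: "D \<ge> 0" unfolding D_def by simp
  have n0: "n > 0" unfolding n_def by simp
  have K0: "K \<ge> 0" unfolding K_def using ph e0 by simp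
  have etapos: "t \<le> N \<Longrightarrow> eta t > 0" for t using mono[of 0 t] e0 by simp
  have pdA: "t \<le> N \<Longrightarrow> pd (A t)" for t unfolding A_def using etapos ph by (intro pd_Amat) auto
  have pdB: "pd (B t)" for t unfolding B_def using e0 ph by (intro pd_Amat) auto
  have monoA: "w \<bullet> (A s *v w) \<le> w \<bullet> (A t *v w)" if "s \<le> t" "t \<le> N" for s t w
  proof -
    have "(\<Sum>\<tau>\<in>{1..s}. (a \<tau> \<bullet> w)^2) \<le> (\<Sum>\<tau>\<in>{1..t}. (a \<tau> \<bullet> w)^2)"
      using that by (intro sum_mono2) auto
    moreover have "eta s * (w \<bullet> w) \<le> eta t * (w \<bullet> w)" using mono[OF that] by (simp add: mult_right_mono)
    ultimately show ?thesis unfolding A_def Amat_quad using ph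
      by (smt (verit) mult_left_mono)
  qed
  have BleA: "w \<bullet> (B t *v w) \<le> w \<bullet> (A t *v w)" if "t \<le> N" for t w
    using mono[of 0 t] that unfolding A_def B_def Amat_quad by (simp add: mult_right_mono)
  have Blow: "w \<bullet> (B t *v w) \<ge> eta 0 * (w \<bullet> w)" for t w
    unfolding B_def Amat_quad using ph by (simp add: sum_nonneg)
  have qAB: "qf (A t) v \<le> qf (B t) v" if "t \<le> N" for t v
    using qf_mono[OF pdB pdA[OF that]] BleA[OF that] by blast
  have qAA: "qf (A t) v \<le> qf (A s) v" if "s \<le> t" "t \<le> N" for s t v
    using qf_mono[OF pdA pdA[OF that(2)]] monoA[OF that] that by simp
  have x0: "x t \<ge> 0" for t unfolding x_def using qf_nonneg[OF pdB] ph by simp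
  have xK: "x t \<le> K" if "t \<in> {1..N}" for t
  proof -
    have "qf (B (t-1)) (a t) \<le> (a t \<bullet> a t) / eta 0" using qf_scalar_bound[OF pdB Blow e0] .
    also have "\<dots> \<le> L^2 / eta 0" using aL[OF that] e0
      by (intro divide_right_mono) (auto simp: power2_norm_eq_inner[symmetric] intro!: power_mono)
    finally have "phi * qf (B (t-1)) (a t) \<le> phi * (L^2 / eta 0)" using ph by (intro mult_left_mono) auto
    then show ?thesis unfolding x_def K_def by simp
  qed
  have pot: "(\<Sum>t=1..N. ln (1 + x t)) \<le> n * P"
    unfolding x_def B_def n_def P_def using potential[OF e0 ph aL] by simp
  have lnnn: "ln (1 + x t) \<ge> 0" for t using x0[of t] by simp
  have sq: "(inv_norm M v)^2 = qf M v" if "pd M" for M v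
  proof -
    have "v \<bullet> (matrix_inv M *v v) \<ge> 0" using qf_nonneg[OF that] unfolding qf_def .
    then show ?thesis unfolding inv_norm_def qf_def by simp
  qed
  have inn: "inv_norm M v \<ge> 0" if "pd M" for M v unfolding inv_norm_def using qf_nonneg[OF that] by (simp add: qf_def)
  have part1: "(\<Sum>t=1..N. inv_norm (A (t-1)) (a t) * (\<Sum>\<tau>\<in>mset_delay d t. inv_norm (A (t-1)) (a \<tau>)))
       \<le> 2 * n * D / phi * (K + 1) * P"
  proof -
    define W where "W t = inv_norm (A (t-1)) (a t)" for t
    have "(\<Sum>t=1..N. inv_norm (A (t-1)) (a t) * (\<Sum>\<tau>\<in>mset_delay d t. inv_norm (A (t-1)) (a \<tau>)))
        \<le> 2 * D * (\<Sum>t=1..N. (W t)^2)"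
      unfolding D_def W_def
    proof (rule comb_bound)
      fix t \<tau> assume t: "t \<in> {1..N}" and tm: "\<tau> \<in> mset_delay d t"
      have "\<tau> < t" using mset_delay_sub[OF _ tm] t by auto
      then have "qf (A (t-1)) (a \<tau>) \<le> qf (A (\<tau>-1)) (a \<tau>)" using t by (intro qAA) auto
      then show "inv_norm (A (t-1)) (a \<tau>) \<le> inv_norm (A (\<tau>-1)) (a \<tau>)"
        unfolding inv_norm_def qf_def by simp
    qed (auto intro!: inn pdA)
    also have "(\<Sum>t=1..N. (W t)^2) \<le> (\<Sum>t=1..N. (K + 1) / phi * ln (1 + x t))"
    proof (rule sum_mono)
      fix t assume t: "t \<in> {1..N}"
      have "(W t)^2 = qf (A (t-1)) (a t)" unfolding W_def using t by (intro sq pdA) auto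
      also have "\<dots> \<le> x t / phi" unfolding x_def using qAB[of "t-1"] t ph by auto
      also have "\<dots> \<le> (K + 1) / phi * ln (1 + x t)"
      proof -
        have "x t \<le> (1 + x t) * ln (1 + x t)" using ln_lower[OF x0[of t]] x0[of t]
          by (simp add: field_simps)
        also have "\<dots> \<le> (K + 1) * ln (1 + x t)" using xK[OF t] lnnn[of t]
          by (intro mult_right_mono) auto
        finally show ?thesis using ph by (simp add: divide_right_mono)
      qed
      finally show "(W t)^2 \<le> (K + 1) / phi * ln (1 + x t)" .
    qed
    also have "\<dots> = (K + 1) / phi * (\<Sum>t=1..N. ln (1 + x t))" by (simp add: sum_distrib_left)
    also have "\<dots> \<le> (K + 1) / phi * (n * P)" using pot K0 ph by (intro mult_left_mono) auto
    finally have "(\<Sum>t=1..N. inv_norm (A (t-1)) (a t) * (\<Sum>\<tau>\<in>mset_delay d t. inv_norm (A (t-1)) (a \<tau>)))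
        \<le> 2 * D * ((K + 1) / phi * (n * P))" using D0 by (simp add: mult_left_mono)
    then show ?thesis by (simp add: field_simps)
  qed
  have part2: "(\<Sum>t=1..N. inv_norm (A t) (a t) * (\<Sum>\<tau>\<in>mset_delay d t. inv_norm (A t) (a \<tau>)))
       \<le> 2 * n * D / phi * P"
  proof -
    define W where "W t = inv_norm (A t) (a t)" for t
    have "(\<Sum>t=1..N. inv_norm (A t) (a t) * (\<Sum>\<tau>\<in>mset_delay d t. inv_norm (A t) (a \<tau>)))
        \<le> 2 * D * (\<Sum>t=1..N. (W t)^2)"
      unfolding D_def W_def
    proof (rule comb_bound)
      fix t \<tau> assume t: "t \<in> {1..N}" and tm: "\<tau> \<in> mset_delay d t"
      have "\<tau> < t" using mset_delay_sub[OF _ tm] t by auto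
      then have "qf (A t) (a \<tau>) \<le> qf (A \<tau>) (a \<tau>)" using t by (intro qAA) auto
      then show "inv_norm (A t) (a \<tau>) \<le> inv_norm (A \<tau>) (a \<tau>)"
        unfolding inv_norm_def qf_def by simp
    qed (auto intro!: inn pdA)
    also have "(\<Sum>t=1..N. (W t)^2) \<le> (\<Sum>t=1..N. 1 / phi * ln (1 + x t))"
    proof (rule sum_mono)
      fix t assume t: "t \<in> {1..N}"
      have tS: "t = Suc (t - 1)" using t by auto
      have BS: "B t = B (t-1) + phi *\<^sub>R outer (a t)"
      proof -
        have "B (Suc (t-1)) = B (t-1) + phi *\<^sub>R outer (a (Suc (t-1)))"
          unfolding B_def by (rule Amat_const_Suc)
        then show ?thesis using tS by metis
      qed
      have "(W t)^2 = qf (A t) (a t)" unfolding W_def using t by (intro sq pdA) auto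
      also have "\<dots> \<le> qf (B t) (a t)" using qAB t by auto
      also have "\<dots> = qf (B (t-1)) (a t) / (1 + x t)"
        unfolding BS x_def using qf_update[OF pdB _ less_imp_le[OF ph]] pdB[of t] BS by simp
      also have "\<dots> = 1 / phi * (x t / (1 + x t))" unfolding x_def using ph by simp
      also have "\<dots> \<le> 1 / phi * ln (1 + x t)" using ln_lower[OF x0[of t]] ph
        by (intro mult_left_mono) auto
      finally show "(W t)^2 \<le> 1 / phi * ln (1 + x t)" .
    qed
    also have "\<dots> = 1 / phi * (\<Sum>t=1..N. ln (1 + x t))" by (simp add: sum_distrib_left)
    also have "\<dots> \<le> 1 / phi * (n * P)" using pot ph by (intro mult_left_mono) auto
    finally have "(\<Sum>t=1..N. inv_norm (A t) (a t) * (\<Sum>\<tau>\<in>mset_delay d t. inv_norm (A t) (a \<tau>)))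
        \<le> 2 * D * (1 / phi * (n * P))" using D0 by (simp add: mult_left_mono)
    then show ?thesis by (simp add: field_simps)
  qed
  show ?thesis using part1 part2 unfolding A_def n_def D_def K_def P_def
    by (simp add: mult_ac add_ac)
qed

end
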